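(* Let $W=(w_{ij})\in\mathrm{GL}(n,\mathbb{Q})\cap\mathrm{Mat}(n,\mathbb{Z})$ with $\gcd(w_{ij})=1$. Let $s$ be the gcd of the entries of $\mathrm{Adj}(W)$, let $\mathbf{v}$ be the sum of the rows of $\mathrm{Adj}(W)$, and set $q_0=|\det\widehat W|$ and $\delta=|\det W|/s$. Then the following are equivalent: (a) $W$ is P-admissible; (b) every entry of $\mathbf{v}$ is divisible by $q_0s$; (c) $q_0$ divides $\delta$ and the vector $\frac{\delta}{q_0}(1,\ldots,1)$ lies in the lattice generated by the rows of $W$.
   Context: For $V=(\mathbf{v}_0,\ldots,\mathbf{v}_n)\in\mathrm{Mat}(n,n+1;\mathbb{Z})$, $V_j$ is the determinant of $V$ with column $\mathbf{v}_j$ deleted and $V^0=(\mathbf{v}_1,\ldots,\mathbf{v}_n)$. $V$ is F-admissible if all $V_j\neq0$, $\gcd(V_0,\ldots,V_n)=1$ and $\sum_j|V_j|\mathbf{v}_j=0$. For $A\in\mathrm{GL}(n,\mathbb{Q})$, $A^*=(A^{-1})^T$. The weighted transverse of $V$ is $(V^0)^*_Q=(V^0)^*\cdot\delta_Q\,\mathrm{diag}(1/|V_1|,\ldots,1/|V_n|)$ with $Q=(|V_0|,\ldots,|V_n|)$ and $\delta_Q=\mathrm{lcm}(Q)$. $W\in\mathrm{Mat}(n,\mathbb{Z})$ is P-admissible if $W=(V^0)^*_Q$ for some F-admissible $V$ with $Q=(|V_0|,\ldots,|V_n|)$. $\mathrm{Adj}(W)=\det(W)W^{-1}$; $s_i$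 is the gcd of the $i$-th row of $\mathrm{Adj}(W)$; $\widehat W=\mathrm{diag}(|\det W|/s_1,\ldots,|\det W|/s_n)\cdot W^{-1}$. *)

theory Defs
  imports "Jordan_Normal_Form.Determinant" "Jordan_Normal_Form.Matrix"
begin

definition inv_mat :: "'a::field mat \<Rightarrow> 'a mat" where
  "inv_mat A = (THE B. B \<in> carrier_mat (dim_row A) (dim_row A) \<and>
       A * B = 1\<^sub>m (dim_row A) \<and> B * A = 1\<^sub>m (dim_row A))"

definition star_mat :: "'a::field mat \<Rightarrow> 'a mat" where
  "star_mat A = transpose_mat (inv_mat A)"

definition del_col :: "'a mat \<Rightarrow> nat \<Rightarrow> 'a mat" where
  "del_col V j = mat (dim_row V) (dim_col V - 1)
      (\<lambda>(i,k). V $$ (i, if k < j then k else Suc k))"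

definition Vdet :: "int mat \<Rightarrow> nat \<Rightarrow> int" where
  "Vdet V j = det (del_col V j)"

definition V0 :: "int mat \<Rightarrow> int mat" where
  "V0 V = del_col V 0"

definition F_admissible :: "nat \<Rightarrow> int mat \<Rightarrow> bool" where
  "F_admissible n V \<longleftrightarrow>
     V \<in> carrier_mat n (Suc n) \<and>
     (\<forall>j\<le>n. Vdet V j \<noteq> 0) \<and>
     Gcd (Vdet V ` {0..n}) = 1 \<and>
     (\<forall>i<n. (\<Sum>j\<le>n. \<bar>Vdet V j\<bar> * V $$ (i,j)) = 0)"

definition deltaQ :: "nat \<Rightarrow> int mat \<Rightarrow> int" where
  "deltaQ n V = Lcm ((\<lambda>j. \<bar>Vdet V j\<bar>) ` {0..n})"

definition weighted_transverse :: "nat \<Rightarrow> int mat \<Rightarrow> rat mat" where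
  "weighted_transverse n V =
     star_mat (map_mat rat_of_int (V0 V)) *
     (rat_of_int (deltaQ n V) \<cdot>\<^sub>m mat_diag n (\<lambda>k. 1 / rat_of_int \<bar>Vdet V (Suc k)\<bar>))"

definition P_admissible :: "nat \<Rightarrow> int mat \<Rightarrow> bool" where
  "P_admissible n W \<longleftrightarrow> W \<in> carrier_mat n n \<and>
     (\<exists>V. F_admissible n V \<and> map_mat rat_of_int W = weighted_transverse n V)"

definition row_gcd_adj :: "int mat \<Rightarrow> nat \<Rightarrow> int" where
  "row_gcd_adj W i = Gcd {adj_mat W $$ (i,j) | j. j < dim_col W}"

definition W_hat :: "int mat \<Rightarrow> rat mat" where
  "W_hat W = mat_diag (dim_row W)
       (\<lambda>i. rat_of_int \<bar>det W\<bar> / rat_of_int (row_gcd_adj W i)) *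
     inv_mat (map_mat rat_of_int W)"

end

theory Submission
  imports Defs
begin
lemma inv_mat_eq:
  fixes A B :: "'a::field mat"
  assumes A: "A \<in> carrier_mat n n" and B: "B \<in> carrier_mat n n" and AB: "A * B = 1\<^sub>m n"
  shows "inv_mat A = B"
proof -
  have BA: "B * A = 1\<^sub>m n" using mat_mult_left_right_inverse[OF A B AB] .
  have dr: "dim_row A = n" using A by auto
  show ?thesis unfolding inv_mat_def dr
  proof (rule the_equality)
    show "B \<in> carrier_mat n n \<and> A * B = 1\<^sub>m n \<and> B * A = 1\<^sub>m n" using B AB BA by auto
  next
    fix C assume C: "C \<in> carrier_mat n n \<and> A * C = 1\<^sub>m n \<and> C * A = 1\<^sub>m n"
    have Cc: "C \<in> carrier_mat n n" using C by auto
    have "C = C * (A * B)" using Cc AB by (simp add: right_mult_one_mat)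
    also have "\<dots> = (C * A) * B" using assoc_mult_mat[OF Cc A B] by simp
    also have "\<dots> = B" using C B by auto
    finally show "C = B" .
  qed
qed

lemma det_mat_diag: "det (mat_diag n (f :: nat \<Rightarrow> 'a :: comm_ring_1)) = (\<Prod>i<n. f i)"
proof -
  have "upper_triangular (mat_diag n f)" unfolding upper_triangular_def mat_diag_def by auto
  from det_upper_triangular[OF this mat_diag_dim]
  have "det (mat_diag n f) = prod_list (diag_mat (mat_diag n f))" .
  also have "diag_mat (mat_diag n f) = map f [0..<n]" unfolding diag_mat_def mat_diag_def by auto
  also have "prod_list (map f [0..<n]) = (\<Prod>i<n. f i)"
    by (induct n) (auto simp: lessThan_Suc mult.commute)
  finally show ?thesis .
qed

lemma mult_entry:
  assumes "A \<in> carrier_mat nr m" "B \<in> carrier_mat m nc" "i < nr" "j < nc"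
  shows "(A * B) $$ (i,j) = (\<Sum>k<m. A $$ (i,k) * B $$ (k,j))"
  using assms by (simp add: scalar_prod_def lessThan_atLeast0)

lemma mult_vec_entry:
  assumes "A \<in> carrier_mat nr m" "x \<in> carrier_vec m" "i < nr"
  shows "(A *\<^sub>v x) $ i = (\<Sum>k<m. A $$ (i,k) * x $ k)"
  using assms by (simp add: scalar_prod_def lessThan_atLeast0)

lemma sum_swap_mult:
  "(\<Sum>k\<in>A. f k * (\<Sum>m\<in>B. g m k)) = (\<Sum>m\<in>B. \<Sum>k\<in>A. g m k * (f k :: 'a :: comm_semiring_0))"
  by (simp add: sum_distrib_left sum.swap[of _ B] mult.commute)

context
  fixes n :: nat and W :: "int mat"
  assumes W: "W \<in> carrier_mat n n" and dW: "det W \<noteq> 0"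
begin

lemma adjW: "adj_mat W \<in> carrier_mat n n" "W * adj_mat W = det W \<cdot>\<^sub>m 1\<^sub>m n"
  "adj_mat W * W = det W \<cdot>\<^sub>m 1\<^sub>m n"
  using adj_mat[OF W] by auto

lemma adjW_entry: assumes "i < n" "j < n"
  shows "(\<Sum>k<n. adj_mat W $$ (i,k) * W $$ (k,j)) = (if i = j then det W else 0)"
proof -
  have "(adj_mat W * W) $$ (i,j) = (\<Sum>k<n. adj_mat W $$ (i,k) * W $$ (k,j))"
    by (rule mult_entry[OF adjW(1) W assms])
  then show ?thesis using adjW(3) assms by auto
qed

lemma Wadj_entry: assumes "i < n" "j < n"
  shows "(\<Sum>k<n. W $$ (i,k) * adj_mat W $$ (k,j)) = (if i = j then det W else 0)"
proof -
  have "(W * adj_mat W) $$ (i,j) = (\<Sum>k<n. W $$ (i,k) * adj_mat W $$ (k,j))"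
    by (rule mult_entry[OF W adjW(1) assms])
  then show ?thesis using adjW(2) assms by auto
qed

lemma Wq_B: "map_mat rat_of_int W * ((1 / rat_of_int (det W)) \<cdot>\<^sub>m map_mat rat_of_int (adj_mat W)) = 1\<^sub>m n"
  proof (rule eq_matI)
    fix i j assume ij: "i < dim_row (1\<^sub>m n :: rat mat)" "j < dim_col (1\<^sub>m n :: rat mat)"
    hence ij': "i < n" "j < n" by auto
    have "(map_mat rat_of_int W * ((1 / rat_of_int (det W)) \<cdot>\<^sub>m map_mat rat_of_int (adj_mat W))) $$ (i,j)
      = (\<Sum>k<n. rat_of_int (W $$ (i,k)) * ((1 / rat_of_int (det W)) * rat_of_int (adj_mat W $$ (k,j))))"
      by (rule trans[OF mult_entry[of _ n n _ n]], insert W adjW(1) ij', auto intro!: sum.cong)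
    also have "\<dots> = (1 / rat_of_int (det W)) * rat_of_int (\<Sum>k<n. W $$ (i,k) * adj_mat W $$ (k,j))"
      by (simp add: sum_distrib_left mult_ac)
    also have "\<dots> = (1\<^sub>m n) $$ (i,j)" unfolding Wadj_entry[OF ij'] using dW ij' by auto
    finally show "(map_mat rat_of_int W * ((1 / rat_of_int (det W)) \<cdot>\<^sub>m map_mat rat_of_int (adj_mat W))) $$ (i,j)
      = (1\<^sub>m n) $$ (i,j)" .
  qed (insert W adjW(1), auto)

lemma inv_Wq: "inv_mat (map_mat rat_of_int W) =
   (1 / rat_of_int (det W)) \<cdot>\<^sub>m map_mat rat_of_int (adj_mat W)"
  by (rule inv_mat_eq[of _ n], insert W adjW(1) Wq_B, auto)

lemma Wq_inv: "map_mat rat_of_int W * inv_mat (map_mat rat_of_int W) = 1\<^sub>m n"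
  unfolding inv_Wq by (rule Wq_B)

lemma inv_Wq_carrier: "inv_mat (map_mat rat_of_int W) \<in> carrier_mat n n"
  unfolding inv_Wq using adjW(1) by auto

lemma det_inv_Wq: "det (inv_mat (map_mat rat_of_int W)) = 1 / rat_of_int (det W)"
proof -
  have c1: "map_mat rat_of_int W \<in> carrier_mat n n" using W by auto
  from arg_cong[OF Wq_inv, of det] det_mult[OF c1 inv_Wq_carrier]
  have "rat_of_int (det W) * det (inv_mat (map_mat rat_of_int W)) = 1" by simp
  then show ?thesis using dW by (simp add: field_simps)
qed

lemma si_dvd: assumes "i < n" "j < n" shows "row_gcd_adj W i dvd adj_mat W $$ (i,j)"
  unfolding row_gcd_adj_def using W assms by (intro Gcd_dvd) auto

lemma si_dvd_det: assumes i: "i < n" shows "row_gcd_adj W i dvd det W"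
proof -
  have "row_gcd_adj W i dvd (\<Sum>k<n. adj_mat W $$ (i,k) * W $$ (k,i))"
    by (intro dvd_sum dvd_mult2 si_dvd i) auto
  then show ?thesis using adjW_entry[OF i i] by simp
qed

lemma si_pos: assumes i: "i < n" shows "row_gcd_adj W i > 0"
proof -
  have "row_gcd_adj W i \<noteq> 0"
  proof
    assume "row_gcd_adj W i = 0"
    hence "\<forall>k<n. adj_mat W $$ (i,k) = 0" using si_dvd[OF i] by auto
    hence "(\<Sum>k<n. adj_mat W $$ (i,k) * W $$ (k,i)) = 0" by auto
    with adjW_entry[OF i i] dW show False by simp
  qed
  moreover have "row_gcd_adj W i \<ge> 0" unfolding row_gcd_adj_def by simp
  ultimately show ?thesis by linarith
qed

lemma s_dvd: assumes "i < n" "j < n"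
  shows "Gcd {adj_mat W $$ (i,j) | i j. i < n \<and> j < n} dvd adj_mat W $$ (i,j)"
  using assms by (intro Gcd_dvd) auto

lemma s_dvd_si: assumes "i < n"
  shows "Gcd {adj_mat W $$ (i,j) | i j. i < n \<and> j < n} dvd row_gcd_adj W i"
  unfolding row_gcd_adj_def using W assms s_dvd by (intro Gcd_greatest) auto

lemma s_pos: assumes n: "n > 0" shows "Gcd {adj_mat W $$ (i,j) | i j. i < n \<and> j < n} > 0"
proof -
  have "Gcd {adj_mat W $$ (i,j) | i j. i < n \<and> j < n} \<noteq> 0"
  proof
    assume h: "Gcd {adj_mat W $$ (i,j) | i j. i < n \<and> j < n} = 0"
    have "row_gcd_adj W 0 = 0" using s_dvd_si[OF n] unfolding h by simp
    with si_pos[OF n] show False by simp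
  qed
  moreover have "Gcd {adj_mat W $$ (i,j) | i j. i < n \<and> j < n} \<ge> 0" by simp
  ultimately show ?thesis by linarith
qed

lemma ei: assumes i: "i < n"
  shows "rat_of_int (\<bar>det W\<bar> div row_gcd_adj W i) = rat_of_int \<bar>det W\<bar> / rat_of_int (row_gcd_adj W i)"
proof -
  have "row_gcd_adj W i dvd \<bar>det W\<bar>" using si_dvd_det[OF i] by simp
  then obtain e where e: "\<bar>det W\<bar> = row_gcd_adj W i * e" by blast
  show ?thesis using si_pos[OF i] unfolding e by simp
qed

lemma ei_pos: assumes i: "i < n" shows "\<bar>det W\<bar> div row_gcd_adj W i > 0"
proof -
  have "row_gcd_adj W i dvd \<bar>det W\<bar>" using si_dvd_det[OF i] by simp
  then obtain e where e: "\<bar>det W\<bar> = row_gcd_adj W i * e" by blast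
  have "e > 0" using si_pos[OF i] dW e by (metis zero_less_abs_iff zero_less_mult_pos)
  then show ?thesis using si_pos[OF i] unfolding e by simp
qed

lemma q0_formula: "\<bar>det (W_hat W)\<bar> =
   rat_of_int (\<Prod>i<n. \<bar>det W\<bar> div row_gcd_adj W i) / rat_of_int \<bar>det W\<bar>"
proof -
  have dr: "dim_row W = n" using W by auto
  have "det (W_hat W) = det (mat_diag n (\<lambda>i. rat_of_int \<bar>det W\<bar> / rat_of_int (row_gcd_adj W i)))
     * det (inv_mat (map_mat rat_of_int W))"
    unfolding W_hat_def dr by (rule det_mult[OF mat_diag_dim inv_Wq_carrier])
  also have "\<dots> = (\<Prod>i<n. rat_of_int (\<bar>det W\<bar> div row_gcd_adj W i)) / rat_of_int (det W)"
    unfolding det_mat_diag det_inv_Wq by (simp add: ei)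
  finally have "det (W_hat W) = rat_of_int (\<Prod>i<n. \<bar>det W\<bar> div row_gcd_adj W i) / rat_of_int (det W)"
    by simp
  moreover have "(\<Prod>i<n. rat_of_int (\<bar>det W\<bar> div row_gcd_adj W i)) > 0" using ei_pos by (intro prod_pos) auto
  ultimately show ?thesis by (simp add: abs_div)
qed

lemma q0_pos: "\<bar>det (W_hat W)\<bar> > 0"
proof -
  have "(\<Prod>i<n. rat_of_int (\<bar>det W\<bar> div row_gcd_adj W i)) > 0" using ei_pos by (intro prod_pos) auto
  then show ?thesis unfolding q0_formula using dW by simp
qed

end

context
  fixes n :: nat and W :: "int mat"
  assumes W: "W \<in> carrier_mat n n" and dW: "det W \<noteq> 0"
begin

lemma W_v: assumes i: "i < n"
  shows "(\<Sum>k<n. W $$ (k,i) * (\<Sum>m<n. adj_mat W $$ (m,k))) = det W"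
proof -
  have "(\<Sum>k<n. W $$ (k,i) * (\<Sum>m<n. adj_mat W $$ (m,k))) = (\<Sum>m<n. \<Sum>k<n. adj_mat W $$ (m,k) * W $$ (k,i))"
    by (rule sum_swap_mult)
  also have "\<dots> = (\<Sum>m<n. if m = i then det W else 0)"
    by (rule sum.cong[OF refl], rule adjW_entry[OF W dW], insert i, auto)
  also have "\<dots> = det W" using i by simp
  finally show ?thesis .
qed

lemma adj_Wc: assumes j: "j < n"
  shows "(\<Sum>i<n. adj_mat W $$ (i,j) * (\<Sum>k<n. W $$ (k,i) * c k)) = c j * det W"
proof -
  have "(\<Sum>i<n. adj_mat W $$ (i,j) * (\<Sum>k<n. W $$ (k,i) * c k)) = (\<Sum>k<n. \<Sum>i<n. (W $$ (k,i) * c k) * adj_mat W $$ (i,j))"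
    by (rule sum_swap_mult)
  also have "\<dots> = (\<Sum>k<n. c k * (\<Sum>i<n. W $$ (k,i) * adj_mat W $$ (i,j)))"
    by (simp add: sum_distrib_left mult_ac)
  also have "\<dots> = (\<Sum>k<n. c k * (if k = j then det W else 0))"
    by (rule sum.cong[OF refl], subst Wadj_entry[OF W dW], insert j, auto)
  also have "\<dots> = c j * det W" using j by (simp add: if_distrib cong: if_cong)
  finally show ?thesis .
qed

lemma b_iff_c:
  assumes n: "n > 0"
  defines "s \<equiv> Gcd {adj_mat W $$ (i,j) | i j. i < n \<and> j < n}"
    and "v \<equiv> vec n (\<lambda>j. \<Sum>i<n. adj_mat W $$ (i,j))"
    and "q0 \<equiv> \<bar>det (W_hat W)\<bar>"
    and "\<delta> \<equiv> rat_of_int \<bar>det W\<bar> / rat_of_int (Gcd {adj_mat W $$ (i,j) | i j. i < n \<and> j < n})"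
  shows "(\<forall>j<n. \<exists>k::int. rat_of_int (v $ j) = q0 * rat_of_int s * rat_of_int k) \<longleftrightarrow>
            ((\<exists>k::int. \<delta> = q0 * rat_of_int k) \<and>
             (\<exists>c::int vec. c \<in> carrier_vec n \<and>
                map_vec rat_of_int (transpose_mat W *\<^sub>v c) = vec n (\<lambda>_. \<delta> / q0)))"
proof -
  have \<delta>s: "\<delta> = rat_of_int \<bar>det W\<bar> / rat_of_int s" unfolding \<delta>_def s_def ..
  have q0: "q0 > 0" unfolding q0_def by (rule q0_pos[OF W dW])
  have sp: "s > 0" unfolding s_def by (rule s_pos[OF W dW n])
  have sgn: "rat_of_int (sgn (det W)) * rat_of_int (det W) = rat_of_int \<bar>det W\<bar>"
    by (simp add: abs_sgn)
  have sgn2: "rat_of_int (sgn (det W)) * rat_of_int (sgn (det W)) = 1" using dW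
    by (cases "det W > 0", auto)
  have WT: "transpose_mat W \<in> carrier_mat n n" using W by auto
  show ?thesis
  proof
    assume b: "\<forall>j<n. \<exists>k::int. rat_of_int (v $ j) = q0 * rat_of_int s * rat_of_int k"
    then obtain kk where kk: "\<And>j. j < n \<Longrightarrow> rat_of_int (v $ j) = q0 * rat_of_int s * rat_of_int (kk j)"
      by metis
    define c where "c = vec n (\<lambda>j. sgn (det W) * kk j)"
    have c: "c \<in> carrier_vec n" unfolding c_def by simp
    have entry: "rat_of_int ((transpose_mat W *\<^sub>v c) $ i) = \<delta> / q0" if i: "i < n" for i
    proof -
      have e1: "(transpose_mat W *\<^sub>v c) $ i = sgn (det W) * (\<Sum>k<n. W $$ (k,i) * kk k)"
        unfolding mult_vec_entry[OF WT c i] using W i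
        by (auto simp: c_def sum_distrib_left mult_ac intro!: sum.cong)
      have "rat_of_int (\<Sum>k<n. W $$ (k,i) * kk k) * (q0 * rat_of_int s)
          = (\<Sum>k<n. rat_of_int (W $$ (k,i)) * (q0 * rat_of_int s * rat_of_int (kk k)))"
        by (simp add: sum_distrib_right sum_distrib_left mult_ac)
      also have "\<dots> = (\<Sum>k<n. rat_of_int (W $$ (k,i)) * rat_of_int (v $ k))"
        by (rule sum.cong[OF refl], subst kk, auto)
      also have "\<dots> = rat_of_int (\<Sum>k<n. W $$ (k,i) * (\<Sum>m<n. adj_mat W $$ (m,k)))"
        unfolding v_def by simp
      also have "\<dots> = rat_of_int (det W)" unfolding W_v[OF i] ..
      finally have e2: "rat_of_int (\<Sum>k<n. W $$ (k,i) * kk k) * (q0 * rat_of_int s) = rat_of_int (det W)" .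
      have "rat_of_int ((transpose_mat W *\<^sub>v c) $ i) * (q0 * rat_of_int s) =
        rat_of_int (sgn (det W)) * rat_of_int (det W)" unfolding e1 using e2 by (simp add: mult_ac)
      then show ?thesis unfolding sgn \<delta>s using q0 sp by (simp add: field_simps)
    qed
    have "map_vec rat_of_int (transpose_mat W *\<^sub>v c) = vec n (\<lambda>_. \<delta> / q0)"
      by (rule eq_vecI, insert entry WT, auto)
    moreover have "\<delta> = q0 * rat_of_int ((transpose_mat W *\<^sub>v c) $ 0)"
      unfolding entry[OF n] using q0 by simp
    ultimately show "(\<exists>k::int. \<delta> = q0 * rat_of_int k) \<and>
             (\<exists>c::int vec. c \<in> carrier_vec n \<and>
                map_vec rat_of_int (transpose_mat W *\<^sub>v c) = vec n (\<lambda>_. \<delta> / q0))"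
      using c by blast
  next
    assume "(\<exists>k::int. \<delta> = q0 * rat_of_int k) \<and>
             (\<exists>c::int vec. c \<in> carrier_vec n \<and>
                map_vec rat_of_int (transpose_mat W *\<^sub>v c) = vec n (\<lambda>_. \<delta> / q0))"
    then obtain c where c: "c \<in> carrier_vec n"
      and ce: "map_vec rat_of_int (transpose_mat W *\<^sub>v c) = vec n (\<lambda>_. \<delta> / q0)" by blast
    have ent: "rat_of_int ((transpose_mat W *\<^sub>v c) $ i) = \<delta> / q0" if i: "i < n" for i
      using arg_cong[OF ce, of "\<lambda>x. x $ i"] i WT by auto
    have ent2: "(transpose_mat W *\<^sub>v c) $ i = (\<Sum>k<n. W $$ (k,i) * c $ k)" if i: "i < n" for i
      unfolding mult_vec_entry[OF WT c i] using W i by (auto intro!: sum.cong)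
    show "\<forall>j<n. \<exists>k::int. rat_of_int (v $ j) = q0 * rat_of_int s * rat_of_int k"
    proof (intro allI impI)
      fix j assume j: "j < n"
      have "rat_of_int (v $ j) * (\<delta> / q0) = (\<Sum>i<n. rat_of_int (adj_mat W $$ (i,j)) * (\<delta> / q0))"
        unfolding v_def using j by (simp add: sum_distrib_right sum_divide_distrib)
      also have "\<dots> = (\<Sum>i<n. rat_of_int (adj_mat W $$ (i,j)) * rat_of_int (\<Sum>k<n. W $$ (k,i) * c $ k))"
        by (rule sum.cong[OF refl], subst ent[symmetric], auto simp: ent2)
      also have "\<dots> = rat_of_int (\<Sum>i<n. adj_mat W $$ (i,j) * (\<Sum>k<n. W $$ (k,i) * c $ k))"
        by simp
      also have "\<dots> = rat_of_int (c $ j * det W)" unfolding adj_Wc[OF j] ..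
      finally have e: "rat_of_int (v $ j) * (\<delta> / q0) = rat_of_int (c $ j) * rat_of_int (det W)" by simp
      have "rat_of_int (v $ j) = q0 * rat_of_int s * rat_of_int (sgn (det W) * c $ j)"
      proof -
        have dpos: "rat_of_int \<bar>det W\<bar> > 0" using dW by simp
        from e have "rat_of_int (v $ j) * rat_of_int \<bar>det W\<bar> = rat_of_int (c $ j) * rat_of_int (det W) * q0 * rat_of_int s"
          unfolding \<delta>s using q0 sp by (simp add: field_simps)
        also have "rat_of_int (det W) = rat_of_int (sgn (det W)) * rat_of_int \<bar>det W\<bar>"
          by (metis of_int_mult sgn_mult_abs)
        finally show ?thesis using dpos by (simp add: field_simps)
      qed
      then show "\<exists>k::int. rat_of_int (v $ j) = q0 * rat_of_int s * rat_of_int k" by blast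
    qed
  qed
qed

end

lemma sum_atMost_split0: "(\<Sum>c\<le>n. f c) = f 0 + (\<Sum>i<n. f (Suc i) :: 'a :: comm_monoid_add)"
  by (induct n) (auto simp: add.assoc)

lemma image_mult_set: "(*) c ` {f j | j. P j} = {c * f j | j. P j}" by auto

lemma image_mult_set2: "(*) c ` {f i j | i j. P i j} = {c * f i j | i j. P i j}" by auto

lemma Gcd_mult_int: "Gcd ((*) c ` A) = \<bar>c\<bar> * Gcd (A :: int set)"
  unfolding Gcd_mult by (simp add: abs_mult)

lemma V0_carrier: "V \<in> carrier_mat n (Suc n) \<Longrightarrow> V0 V \<in> carrier_mat n n"
  unfolding V0_def del_col_def by auto

lemma V0_entry: "V \<in> carrier_mat n (Suc n) \<Longrightarrow> j < n \<Longrightarrow> i < n \<Longrightarrow> V0 V $$ (j,i) = V $$ (j, Suc i)"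
  unfolding V0_def del_col_def by auto

lemma det_V0: "det (V0 V) = Vdet V 0" unfolding V0_def Vdet_def ..

locale adm =
  fixes n :: nat and W :: "int mat" and V :: "int mat"
  assumes W: "W \<in> carrier_mat n n" and dW: "det W \<noteq> 0" and n: "n > 0"
    and F: "F_admissible n V" and WV: "map_mat rat_of_int W = weighted_transverse n V"
begin

abbreviation "A \<equiv> V0 V"
abbreviation "Q j \<equiv> \<bar>Vdet V j\<bar>"
abbreviation "dQ \<equiv> deltaQ n V"

lemma V: "V \<in> carrier_mat n (Suc n)" using F unfolding F_admissible_def by auto
lemma A: "A \<in> carrier_mat n n" by (rule V0_carrier[OF V])
lemma dA: "det A \<noteq> 0" unfolding det_V0 using F unfolding F_admissible_def by auto
lemma Qpos: "j \<le> n \<Longrightarrow> Q j > 0" using F unfolding F_admissible_def by auto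

lemma dQ_pos: "dQ > 0"
proof -
  have "dQ \<noteq> 0" unfolding deltaQ_def by (subst Lcm_0_iff, insert Qpos, auto)
  moreover have "dQ \<ge> 0" unfolding deltaQ_def by simp
  ultimately show ?thesis by linarith
qed

lemma Q_dvd_dQ: "j \<le> n \<Longrightarrow> Q j dvd dQ" unfolding deltaQ_def by (intro dvd_Lcm) auto

lemma W_entry: assumes i: "i < n" and j: "j < n"
  shows "rat_of_int (W $$ (i,j)) = rat_of_int (adj_mat A $$ (j,i)) * rat_of_int dQ /
     (rat_of_int (det A) * rat_of_int (Q (Suc j)))"
proof -
  have Aq: "map_mat rat_of_int A \<in> carrier_mat n n" using A by auto
  have inv: "inv_mat (map_mat rat_of_int A) = (1 / rat_of_int (det A)) \<cdot>\<^sub>m map_mat rat_of_int (adj_mat A)"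
    by (rule inv_Wq[OF A dA])
  have adjA: "adj_mat A \<in> carrier_mat n n" using adj_mat[OF A] by auto
  have st: "star_mat (map_mat rat_of_int A) \<in> carrier_mat n n"
    unfolding star_mat_def inv using adjA by auto
  have "rat_of_int (W $$ (i,j)) = weighted_transverse n V $$ (i,j)"
    using arg_cong[OF WV, of "\<lambda>M. M $$ (i,j)"] W i j by auto
  also have "\<dots> = (\<Sum>k<n. star_mat (map_mat rat_of_int A) $$ (i,k) *
      (rat_of_int dQ \<cdot>\<^sub>m mat_diag n (\<lambda>k. 1 / rat_of_int (Q (Suc k)))) $$ (k,j))"
    unfolding weighted_transverse_def by (rule mult_entry[OF st _ i j], auto)
  also have "\<dots> = (\<Sum>k<n. if k = j then star_mat (map_mat rat_of_int A) $$ (i,j) *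
      (rat_of_int dQ / rat_of_int (Q (Suc j))) else 0)"
    by (rule sum.cong[OF refl], insert j, auto simp: mat_diag_def)
  also have "\<dots> = star_mat (map_mat rat_of_int A) $$ (i,j) * (rat_of_int dQ / rat_of_int (Q (Suc j)))"
    using j by simp
  also have "star_mat (map_mat rat_of_int A) $$ (i,j) = rat_of_int (adj_mat A $$ (j,i)) / rat_of_int (det A)"
    unfolding star_mat_def inv using adjA i j by auto
  finally show ?thesis by simp
qed

lemma ATW: assumes i: "i < n" and m: "m < n"
  shows "rat_of_int (\<Sum>j<n. A $$ (j,i) * W $$ (j,m)) = (if i = m then rat_of_int dQ / rat_of_int (Q (Suc i)) else 0)"
proof -
  have "rat_of_int (\<Sum>j<n. A $$ (j,i) * W $$ (j,m)) =
     (\<Sum>j<n. rat_of_int (A $$ (j,i)) * (rat_of_int (adj_mat A $$ (m,j)) * rat_of_int dQ /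
     (rat_of_int (det A) * rat_of_int (Q (Suc m)))))"
    by (simp add: W_entry m)
  also have "\<dots> = rat_of_int (\<Sum>j<n. adj_mat A $$ (m,j) * A $$ (j,i)) * (rat_of_int dQ /
     (rat_of_int (det A) * rat_of_int (Q (Suc m))))"
    unfolding of_int_sum of_int_mult sum_distrib_right
    by (rule sum.cong[OF refl], simp only: divide_inverse mult_ac)
  also have "\<dots> = (if i = m then rat_of_int dQ / rat_of_int (Q (Suc i)) else 0)"
    unfolding adjW_entry[OF A dA m i] using dA by auto
  finally show ?thesis .
qed

lemma ATW_int: assumes i: "i < n" and m: "m < n"
  shows "Q (Suc i) * (\<Sum>j<n. A $$ (j,i) * W $$ (j,m)) = (if i = m then dQ else 0)"
proof -
  have q: "rat_of_int (Q (Suc i)) \<noteq> 0" using Qpos[of "Suc i"] i by auto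
  have e: "rat_of_int (\<Sum>j<n. A $$ (j,i) * W $$ (j,m)) = (if i = m then rat_of_int dQ / rat_of_int (Q (Suc i)) else 0)"
    by (rule ATW[OF i m])
  have "rat_of_int (Q (Suc i) * (\<Sum>j<n. A $$ (j,i) * W $$ (j,m))) = rat_of_int (if i = m then dQ else 0)"
  proof (cases "i = m")
    case True
    show ?thesis unfolding of_int_mult e using True q by simp
  next
    case False
    show ?thesis unfolding of_int_mult e using False by simp
  qed
  then show ?thesis by (simp only: of_int_eq_iff)
qed

lemma adjW_A: assumes i: "i < n" and k: "k < n"
  shows "dQ * adj_mat W $$ (i,k) = det W * Q (Suc i) * A $$ (k,i)"
proof -
  have "Q (Suc i) * (\<Sum>m<n. (\<Sum>j<n. A $$ (j,i) * W $$ (j,m)) * adj_mat W $$ (m,k)) =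
    (\<Sum>m<n. (Q (Suc i) * (\<Sum>j<n. A $$ (j,i) * W $$ (j,m))) * adj_mat W $$ (m,k))"
    by (simp only: sum_distrib_left[symmetric] mult.assoc)
  also have "\<dots> = (\<Sum>m<n. if i = m then dQ * adj_mat W $$ (m,k) else 0)"
    by (rule sum.cong[OF refl], subst ATW_int[OF i], auto)
  also have "\<dots> = dQ * adj_mat W $$ (i,k)" using i by simp
  finally have e1: "Q (Suc i) * (\<Sum>m<n. (\<Sum>j<n. A $$ (j,i) * W $$ (j,m)) * adj_mat W $$ (m,k)) = dQ * adj_mat W $$ (i,k)" .
  have "(\<Sum>m<n. (\<Sum>j<n. A $$ (j,i) * W $$ (j,m)) * adj_mat W $$ (m,k)) =
     (\<Sum>m<n. adj_mat W $$ (m,k) * (\<Sum>j<n. A $$ (j,i) * W $$ (j,m)))"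
    by (simp only: mult.commute)
  also have "\<dots> = (\<Sum>j<n. \<Sum>m<n. (A $$ (j,i) * W $$ (j,m)) * adj_mat W $$ (m,k))"
    by (rule sum_swap_mult)
  also have "\<dots> = (\<Sum>j<n. A $$ (j,i) * (\<Sum>m<n. W $$ (j,m) * adj_mat W $$ (m,k)))"
    by (simp only: sum_distrib_left mult.assoc)
  also have "\<dots> = (\<Sum>j<n. if j = k then A $$ (j,i) * det W else 0)"
    by (rule sum.cong[OF refl], subst Wadj_entry[OF W dW], insert k, auto)
  also have "\<dots> = A $$ (k,i) * det W" using k by simp
  finally show ?thesis using e1 by (simp add: mult_ac)
qed

end

lemma set_cong1: "(\<And>j. P j \<Longrightarrow> f j = h j) \<Longrightarrow> {f j | j. P j} = {h j | j. P j}"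
  by (intro Collect_cong) metis

lemma set_cong2: "(\<And>i j. P i j \<Longrightarrow> f i j = h i j) \<Longrightarrow> {f i j | i j. P i j} = {h i j | i j. P i j}"
  by (intro Collect_cong) metis

context adm begin

lemma detrel: "\<bar>det W\<bar> * \<bar>det A\<bar> * (\<Prod>i<n. Q (Suc i)) = dQ ^ n"
proof -
  have AT: "transpose_mat A \<in> carrier_mat n n" using A by auto
  have ATW: "transpose_mat A * W \<in> carrier_mat n n" using AT W by auto
  have "mat_diag n (\<lambda>i. Q (Suc i)) * (transpose_mat A * W) = dQ \<cdot>\<^sub>m 1\<^sub>m n"
  proof (rule eq_matI)
    fix i m assume "i < dim_row (dQ \<cdot>\<^sub>m 1\<^sub>m n)" "m < dim_col (dQ \<cdot>\<^sub>m 1\<^sub>m n)"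
    hence i: "i < n" and m: "m < n" by auto
    have "(mat_diag n (\<lambda>i. Q (Suc i)) * (transpose_mat A * W)) $$ (i,m) =
       Q (Suc i) * (transpose_mat A * W) $$ (i,m)"
      unfolding mat_diag_mult_left[OF ATW] using i m by simp
    also have "(transpose_mat A * W) $$ (i,m) = (\<Sum>j<n. A $$ (j,i) * W $$ (j,m))"
      unfolding mult_entry[OF AT W i m] using A i by (auto intro!: sum.cong)
    also have "Q (Suc i) * \<dots> = (if i = m then dQ else 0)" by (rule ATW_int[OF i m])
    finally show "(mat_diag n (\<lambda>i. Q (Suc i)) * (transpose_mat A * W)) $$ (i,m) = (dQ \<cdot>\<^sub>m 1\<^sub>m n) $$ (i,m)"
      using i m by simp
  qed (insert ATW, auto simp: mat_diag_def)
  from arg_cong[OF this, of det]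
  have "(\<Prod>i<n. Q (Suc i)) * (det A * det W) = dQ ^ n"
    unfolding det_mult[OF mat_diag_dim ATW] det_mult[OF AT W] det_transpose[OF A] det_mat_diag
    by simp
  then have "\<bar>(\<Prod>i<n. Q (Suc i)) * (det A * det W)\<bar> = dQ ^ n" using dQ_pos by simp
  then show ?thesis by (simp add: abs_mult abs_prod mult_ac)
qed

definition g :: "nat \<Rightarrow> int" where "g i = Gcd {A $$ (j,i) | j. j < n}"
definition G :: int where "G = Gcd {Q (Suc i) * A $$ (j,i) | i j. i < n \<and> j < n}"

lemma si_rel: assumes i: "i < n" shows "dQ * row_gcd_adj W i = \<bar>det W\<bar> * Q (Suc i) * g i"
proof -
  have dc: "dim_col W = n" using W by auto
  have "(*) dQ ` {adj_mat W $$ (i,j) | j. j < dim_col W} = {dQ * adj_mat W $$ (i,j) | j. j < n}"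
    unfolding dc by (rule image_mult_set)
  also have "\<dots> = {(det W * Q (Suc i)) * A $$ (j,i) | j. j < n}"
    by (rule set_cong1, rule adjW_A[OF i], auto)
  also have "\<dots> = (*) (det W * Q (Suc i)) ` {A $$ (j,i) | j. j < n}"
    by (rule image_mult_set[symmetric])
  finally have "Gcd ((*) dQ ` {adj_mat W $$ (i,j) | j. j < dim_col W}) = Gcd ((*) (det W * Q (Suc i)) ` {A $$ (j,i) | j. j < n})"
    by simp
  then show ?thesis unfolding Gcd_mult_int row_gcd_adj_def g_def using dQ_pos by (simp add: abs_mult)
qed

lemma s_rel: "dQ * Gcd {adj_mat W $$ (i,j) | i j. i < n \<and> j < n} = \<bar>det W\<bar> * G"
proof -
  have "(*) dQ ` {adj_mat W $$ (i,j) | i j. i < n \<and> j < n} = {dQ * adj_mat W $$ (i,j) | i j. i < n \<and> j < n}"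
    by (rule image_mult_set2)
  also have "\<dots> = {det W * (Q (Suc i) * A $$ (j,i)) | i j. i < n \<and> j < n}"
    by (rule set_cong2, subst adjW_A, auto simp: mult.assoc)
  also have "\<dots> = (*) (det W) ` {Q (Suc i) * A $$ (j,i) | i j. i < n \<and> j < n}"
    by (rule image_mult_set2[symmetric])
  finally have "Gcd ((*) dQ ` {adj_mat W $$ (i,j) | i j. i < n \<and> j < n}) = Gcd ((*) (det W) ` {Q (Suc i) * A $$ (j,i) | i j. i < n \<and> j < n})"
    by simp
  then show ?thesis unfolding Gcd_mult_int G_def using dQ_pos by simp
qed

lemma g_pos: assumes i: "i < n" shows "g i > 0"
proof -
  have "dQ * row_gcd_adj W i > 0" using dQ_pos si_pos[OF W dW i] by simp
  then have "g i \<noteq> 0" unfolding si_rel[OF i] by auto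
  moreover have "g i \<ge> 0" unfolding g_def by simp
  ultimately show ?thesis by linarith
qed

lemma e_rel: assumes i: "i < n" shows "(\<bar>det W\<bar> div row_gcd_adj W i) * Q (Suc i) * g i = dQ"
proof -
  have "row_gcd_adj W i dvd \<bar>det W\<bar>" using si_dvd_det[OF W dW i] by simp
  then obtain e where e: "\<bar>det W\<bar> = row_gcd_adj W i * e" by blast
  have sp: "row_gcd_adj W i > 0" by (rule si_pos[OF W dW i])
  have "row_gcd_adj W i * (e * Q (Suc i) * g i) = row_gcd_adj W i * dQ"
    using si_rel[OF i] unfolding e by (simp only: mult_ac)
  moreover have cne: "row_gcd_adj W i \<noteq> 0" using sp by simp
  ultimately have "e * Q (Suc i) * g i = dQ" using mult_left_cancel[OF cne] by blast
  moreover have "row_gcd_adj W i * e div row_gcd_adj W i = e" using sp by simp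
  ultimately show ?thesis unfolding e by (simp add: mult_ac)
qed

lemma q0_rel: "\<bar>det (W_hat W)\<bar> = rat_of_int \<bar>det A\<bar> / rat_of_int (\<Prod>i<n. g i)"
proof -
  let ?E = "\<Prod>i<n. \<bar>det W\<bar> div row_gcd_adj W i"
  let ?P = "\<Prod>i<n. g i"
  let ?R = "\<Prod>i<n. Q (Suc i)"
  have "?E * ?P * ?R = (\<Prod>i<n. (\<bar>det W\<bar> div row_gcd_adj W i) * Q (Suc i) * g i)"
    by (simp add: prod.distrib mult_ac)
  also have "\<dots> = (\<Prod>i<n. dQ)" by (rule prod.cong[OF refl], rule e_rel, auto)
  also have "\<dots> = dQ ^ n" by simp
  also have "\<dots> = \<bar>det W\<bar> * \<bar>det A\<bar> * ?R" by (rule detrel[symmetric])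
  finally have "(?E * ?P) * ?R = (\<bar>det W\<bar> * \<bar>det A\<bar>) * ?R" by simp
  moreover have "?R \<noteq> 0" using Qpos by (auto simp: prod_zero_iff)
  ultimately have EP: "?E * ?P = \<bar>det W\<bar> * \<bar>det A\<bar>" by simp
  have Pp: "?P > 0" using g_pos by (intro prod_pos) auto
  have "\<bar>det (W_hat W)\<bar> = rat_of_int ?E / rat_of_int \<bar>det W\<bar>" by (rule q0_formula[OF W dW])
  also have "\<dots> = rat_of_int \<bar>det A\<bar> / rat_of_int ?P"
  proof -
    have EPq: "rat_of_int ?E * rat_of_int ?P = rat_of_int \<bar>det W\<bar> * rat_of_int \<bar>det A\<bar>"
      using arg_cong[OF EP, of rat_of_int] by (simp only: of_int_mult)
    have Pq: "rat_of_int ?P \<noteq> 0" using Pp by (simp only: of_int_eq_0_iff)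
    have dq: "rat_of_int \<bar>det W\<bar> \<noteq> 0" using dW by simp
    show ?thesis unfolding frac_eq_eq[OF dq Pq] by (metis EPq mult.commute)
  qed
  finally show ?thesis .
qed

end

lemma abs_mult_dvd: "(G::int) dvd \<bar>a\<bar> * b \<Longrightarrow> G dvd a * b"
  by (cases "a \<ge> 0") auto

lemma cancel_aux: assumes "(dq::rat) \<noteq> 0" "p \<noteq> 0" "a * (dq * p) = b * (dq * s) * c"
  shows "a = b / p * s * c"
proof -
  from assms(3) have "dq * (a * p) = dq * (b * s * c)" by (simp only: mult_ac)
  with assms(1) have "a * p = b * s * c" by simp
  with assms(2) show ?thesis by (simp add: field_simps)
qed

context adm begin

lemma Fsum: assumes j: "j < n" shows "(\<Sum>c\<le>n. Q c * V $$ (j,c)) = 0"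
  using F j unfolding F_admissible_def by auto

lemma v_rel: assumes j: "j < n"
  shows "dQ * (\<Sum>i<n. adj_mat W $$ (i,j)) = - (det W * Q 0 * V $$ (j,0))"
proof -
  have "dQ * (\<Sum>i<n. adj_mat W $$ (i,j)) = (\<Sum>i<n. dQ * adj_mat W $$ (i,j))"
    by (simp add: sum_distrib_left)
  also have "\<dots> = (\<Sum>i<n. det W * (Q (Suc i) * V $$ (j, Suc i)))"
    by (rule sum.cong[OF refl], subst adjW_A, insert j V0_entry[OF V], auto simp: mult.assoc)
  also have "\<dots> = det W * (\<Sum>i<n. Q (Suc i) * V $$ (j, Suc i))" by (simp add: sum_distrib_left)
  also have "(\<Sum>i<n. Q (Suc i) * V $$ (j, Suc i)) = - (Q 0 * V $$ (j,0))"
    using Fsum[OF j] unfolding sum_atMost_split0 by simp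
  finally show ?thesis by simp
qed

lemma G_dvd_A: assumes "i < n" "j < n" shows "G dvd Q (Suc i) * A $$ (j,i)"
  unfolding G_def using assms by (intro Gcd_dvd) auto

lemma G_dvd_Qg: assumes i: "i < n" shows "G dvd Q (Suc i) * g i"
proof -
  have "G dvd Gcd ((*) (Q (Suc i)) ` {A $$ (j,i) | j. j < n})"
    by (rule Gcd_greatest, insert G_dvd_A[OF i], auto)
  then show ?thesis unfolding Gcd_mult_int g_def by simp
qed

lemma G_dvd: assumes j: "j < n" shows "G dvd (\<Prod>i<n. g i) * V $$ (j,0)"
proof -
  let ?y = "(\<Prod>i<n. g i) * V $$ (j,0)"
  have all: "G dvd Vdet V m * ?y" if m: "m \<le> n" for m
  proof (cases m)
    case 0
    have "G dvd (\<Sum>i<n. Q (Suc i) * A $$ (j,i))"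
      by (rule dvd_sum, rule G_dvd_A, insert j, auto)
    also have "(\<Sum>i<n. Q (Suc i) * A $$ (j,i)) = (\<Sum>i<n. Q (Suc i) * V $$ (j, Suc i))"
      by (rule sum.cong[OF refl], insert j V0_entry[OF V], auto)
    also have "\<dots> = - (Q 0 * V $$ (j,0))"
      using Fsum[OF j] unfolding sum_atMost_split0 by simp
    finally have "G dvd Q 0 * V $$ (j,0)" by simp
    then have "G dvd Vdet V 0 * V $$ (j,0)" by (rule abs_mult_dvd)
    then have "G dvd Vdet V 0 * V $$ (j,0) * (\<Prod>i<n. g i)" by (rule dvd_mult2)
    then show ?thesis unfolding 0 by (simp add: mult_ac)
  next
    case (Suc i)
    with m have i: "i < n" by auto
    have "G dvd Q (Suc i) * g i" by (rule G_dvd_Qg[OF i])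
    also have "Q (Suc i) * g i dvd Q (Suc i) * (\<Prod>i<n. g i)"
      by (rule mult_dvd_mono, auto intro: dvd_prodI i)
    finally have "G dvd Vdet V (Suc i) * (\<Prod>i<n. g i)" by (rule abs_mult_dvd)
    then show ?thesis unfolding Suc by (simp add: mult.assoc[symmetric] dvd_mult2)
  qed
  have "G dvd Gcd ((*) ?y ` (Vdet V ` {0..n}))"
    by (rule Gcd_greatest, insert all, auto simp: mult.commute)
  also have "\<dots> = \<bar>?y\<bar>" unfolding Gcd_mult_int using F unfolding F_admissible_def by simp
  finally show ?thesis by simp
qed

lemma a_to_b:
  "\<forall>j<n. \<exists>k::int. rat_of_int (vec n (\<lambda>j. \<Sum>i<n. adj_mat W $$ (i,j)) $ j) =
      \<bar>det (W_hat W)\<bar> * rat_of_int (Gcd {adj_mat W $$ (i,j) | i j. i < n \<and> j < n}) * rat_of_int k"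
proof (intro allI impI)
  fix j assume j: "j < n"
  define P where "P = (\<Prod>i<n. g i)"
  define s where "s = Gcd {adj_mat W $$ (i,j) | i j. i < n \<and> j < n}"
  define x where "x = V $$ (j,0)"
  have Pp: "P > 0" unfolding P_def using g_pos by (intro prod_pos) auto
  have q0: "\<bar>det (W_hat W)\<bar> = rat_of_int \<bar>det A\<bar> / rat_of_int P" unfolding P_def by (rule q0_rel)
  have srel: "dQ * s = \<bar>det W\<bar> * G" unfolding s_def by (rule s_rel)
  have vrel: "dQ * (\<Sum>i<n. adj_mat W $$ (i,j)) = - (det W * Q 0 * x)" unfolding x_def by (rule v_rel[OF j])
  obtain t where t: "P * x = G * t" using G_dvd[OF j] unfolding P_def x_def by blast
  have Q0: "Q 0 = \<bar>det A\<bar>" unfolding det_V0 ..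
  define sg where "sg = sgn (det W)"
  define dd where "dd = \<bar>det W\<bar>"
  have dWe: "det W = sg * dd" unfolding sg_def dd_def by (simp add: sgn_mult_abs)
  have key: "(\<Sum>i<n. adj_mat W $$ (i,j)) * (dQ * P) = \<bar>det A\<bar> * (dQ * s) * (- sgn (det W) * t)"
  proof -
    have "(\<Sum>i<n. adj_mat W $$ (i,j)) * (dQ * P) = - (sg * dd * \<bar>det A\<bar> * x) * P"
      using vrel unfolding Q0 dWe by (simp add: mult_ac)
    also have "\<dots> = - (sg * dd * \<bar>det A\<bar> * (P * x))"
      by (simp add: mult_ac)
    also have "\<dots> = \<bar>det A\<bar> * (dd * G) * (- sg * t)"
      unfolding t by (simp add: mult_ac)
    finally show ?thesis unfolding srel sg_def dd_def .
  qed
  have "rat_of_int (\<Sum>i<n. adj_mat W $$ (i,j)) = \<bar>det (W_hat W)\<bar> * rat_of_int s * rat_of_int (- sgn (det W) * t)"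
  proof -
    have nz: "rat_of_int dQ * rat_of_int P \<noteq> 0" using Pp dQ_pos by simp
    have "rat_of_int (\<Sum>i<n. adj_mat W $$ (i,j)) * (rat_of_int dQ * rat_of_int P) =
       rat_of_int \<bar>det A\<bar> * (rat_of_int dQ * rat_of_int s) * rat_of_int (- sgn (det W) * t)"
      using arg_cong[OF key, of rat_of_int] by (simp only: of_int_mult)
    then show ?thesis unfolding q0 by (rule cancel_aux[rotated 2], insert Pp dQ_pos, auto)
  qed
  then show "\<exists>k::int. rat_of_int (vec n (\<lambda>j. \<Sum>i<n. adj_mat W $$ (i,j)) $ j) =
      \<bar>det (W_hat W)\<bar> * rat_of_int (Gcd {adj_mat W $$ (i,j) | i j. i < n \<and> j < n}) * rat_of_int k"
    unfolding s_def by (intro exI[of _ "- sgn (det W) * t"], simp only: index_vec[OF j])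
qed

end

lemma div_aux: "(a::int) * b = p \<Longrightarrow> b \<noteq> 0 \<Longrightarrow> rat_of_int a = rat_of_int p / rat_of_int b"
  by (simp add: field_simps flip: of_int_mult)

locale bside =
  fixes n :: nat and W :: "int mat" and kk :: "nat \<Rightarrow> int"
  assumes W: "W \<in> carrier_mat n n" and dW: "det W \<noteq> 0" and n: "n > 0"
    and gcdW: "Gcd {W $$ (i,j) | i j. i < n \<and> j < n} = 1"
    and kk: "\<And>j. j < n \<Longrightarrow> rat_of_int (\<Sum>i<n. adj_mat W $$ (i,j)) =
       \<bar>det (W_hat W)\<bar> * rat_of_int (Gcd {adj_mat W $$ (i,j) | i j. i < n \<and> j < n}) * rat_of_int (kk j)"
begin

definition s :: int where "s = Gcd {adj_mat W $$ (i,j) | i j. i < n \<and> j < n}"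
abbreviation si where "si i \<equiv> row_gcd_adj W i"
definition r :: "nat \<Rightarrow> int" where "r i = si i div s"
definition e :: "nat \<Rightarrow> int" where "e i = \<bar>det W\<bar> div si i"
definition sg :: int where "sg = sgn (det W)"
definition Ab :: "int mat" where "Ab = mat n n (\<lambda>(j,i). sg * (adj_mat W $$ (i,j) div si i))"
definition v0 :: "nat \<Rightarrow> int" where "v0 j = - sg * kk j"
definition Vb :: "int mat" where "Vb = mat n (Suc n) (\<lambda>(j,c). if c = 0 then v0 j else Ab $$ (j, c - 1))"
definition q0i :: int where "q0i = \<bar>det Ab\<bar>"

lemma s_pos': "s > 0" unfolding s_def by (rule s_pos[OF W dW n])
lemma si_pos': "i < n \<Longrightarrow> si i > 0" by (rule si_pos[OF W dW])
lemma Ab: "Ab \<in> carrier_mat n n" unfolding Ab_def by auto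
lemma Vb: "Vb \<in> carrier_mat n (Suc n)" unfolding Vb_def by auto
lemma Ab_entry: "j < n \<Longrightarrow> i < n \<Longrightarrow> Ab $$ (j,i) = sg * (adj_mat W $$ (i,j) div si i)"
  unfolding Ab_def by auto

lemma si_div: assumes "i < n" "j < n" shows "si i * (adj_mat W $$ (i,j) div si i) = adj_mat W $$ (i,j)"
  using si_dvd[OF W dW assms] by simp

lemma r_rel: assumes i: "i < n" shows "s * r i = si i"
  unfolding r_def s_def using s_dvd_si[OF W dW i] by simp

lemma r_pos: assumes i: "i < n" shows "r i > 0"
  using r_rel[OF i] si_pos'[OF i] s_pos' by (metis zero_less_mult_pos)

lemma e_rel': assumes i: "i < n" shows "si i * e i = \<bar>det W\<bar>"
  unfolding e_def using si_dvd_det[OF W dW i] by simp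

lemma sg_d: "sg * det W = \<bar>det W\<bar>" unfolding sg_def by (simp add: abs_sgn)

lemma sg_sq: "sg * sg = 1" unfolding sg_def using dW by (cases "det W > 0") auto

lemma delcol0: "del_col Vb 0 = Ab"
  by (rule eq_matI, insert Ab Vb, auto simp: del_col_def Vb_def)

lemma Vdet0: "Vdet Vb 0 = det Ab" unfolding Vdet_def delcol0 ..

lemma AbTW: assumes i: "i < n" and m: "m < n"
  shows "(\<Sum>j<n. Ab $$ (j,i) * W $$ (j,m)) = (if i = m then e i else 0)"
proof -
  have "si i * (\<Sum>j<n. Ab $$ (j,i) * W $$ (j,m)) = (\<Sum>j<n. sg * (si i * (adj_mat W $$ (i,j) div si i)) * W $$ (j,m))"
    by (simp add: sum_distrib_left Ab_entry i mult_ac)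
  also have "\<dots> = sg * (\<Sum>j<n. adj_mat W $$ (i,j) * W $$ (j,m))"
    by (simp add: si_div i sum_distrib_left mult_ac)
  also have "\<dots> = si i * (if i = m then e i else 0)"
    unfolding adjW_entry[OF W dW i m] using e_rel'[OF i] sg_d by auto
  finally show ?thesis using si_pos'[OF i] by simp
qed

lemma AbTW_mat: "transpose_mat Ab * W = mat_diag n e"
proof (rule eq_matI)
  fix i m assume "i < dim_row (mat_diag n e)" "m < dim_col (mat_diag n e)"
  hence i: "i < n" and m: "m < n" by (auto simp: mat_diag_def)
  have "(transpose_mat Ab * W) $$ (i,m) = (\<Sum>j<n. transpose_mat Ab $$ (i,j) * W $$ (j,m))"
    by (rule mult_entry[OF _ W i m], insert Ab, auto)
  also have "\<dots> = (\<Sum>j<n. Ab $$ (j,i) * W $$ (j,m))" by (rule sum.cong, insert Ab i, auto)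
  also have "\<dots> = mat_diag n e $$ (i,m)" unfolding AbTW[OF i m] using i m by (auto simp: mat_diag_def)
  finally show "(transpose_mat Ab * W) $$ (i,m) = mat_diag n e $$ (i,m)" .
qed (insert Ab W, auto simp: mat_diag_def)

lemma detAb: "det Ab * det W = (\<Prod>i<n. e i)"
proof -
  have AT: "transpose_mat Ab \<in> carrier_mat n n" using Ab by auto
  have "det (transpose_mat Ab * W) = det Ab * det W"
    unfolding det_mult[OF AT W] det_transpose[OF Ab] ..
  then show ?thesis unfolding AbTW_mat det_mat_diag by simp
qed

lemma q0i_pos: "q0i > 0"
proof -
  have "(\<Prod>i<n. e i) > 0" unfolding e_def using ei_pos[OF W dW] by (intro prod_pos) auto
  then have "det Ab \<noteq> 0" using detAb by (metis mult_zero_left less_irrefl)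
  then show ?thesis unfolding q0i_def by auto
qed

lemma q0i_eq: "rat_of_int q0i = \<bar>det (W_hat W)\<bar>"
proof -
  have pe: "(\<Prod>i<n. e i) > 0" unfolding e_def using ei_pos[OF W dW] by (intro prod_pos) auto
  have "\<bar>det Ab\<bar> * \<bar>det W\<bar> = (\<Prod>i<n. e i)"
    using arg_cong[OF detAb, of abs] pe by (simp only: abs_mult abs_of_pos)
  then have "rat_of_int \<bar>det Ab\<bar> = rat_of_int (\<Prod>i<n. e i) / rat_of_int \<bar>det W\<bar>"
    by (rule div_aux, insert dW, simp)
  then show ?thesis unfolding q0_formula[OF W dW] q0i_def e_def by simp
qed

lemma v_int: assumes j: "j < n" shows "(\<Sum>i<n. adj_mat W $$ (i,j)) = q0i * s * kk j"
proof -
  have "rat_of_int (\<Sum>i<n. adj_mat W $$ (i,j)) = rat_of_int (q0i * s * kk j)"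
    unfolding kk[OF j] q0i_eq[symmetric] s_def by simp
  then show ?thesis by (simp only: of_int_eq_iff)
qed

lemma sum_rel: assumes j: "j < n" shows "q0i * v0 j + (\<Sum>i<n. r i * Ab $$ (j,i)) = 0"
proof -
  have "s * (\<Sum>i<n. r i * Ab $$ (j,i)) = (\<Sum>i<n. sg * ((s * r i) * (adj_mat W $$ (i,j) div si i)))"
    by (simp add: sum_distrib_left Ab_entry j mult_ac)
  also have "\<dots> = (\<Sum>i<n. sg * adj_mat W $$ (i,j))"
    by (rule sum.cong[OF refl], simp add: r_rel si_div j)
  also have "\<dots> = sg * (q0i * s * kk j)" unfolding sum_distrib_left[symmetric] v_int[OF j] ..
  finally have "s * (\<Sum>i<n. r i * Ab $$ (j,i)) = s * (sg * q0i * kk j)" by (simp add: mult_ac)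
  then have "(\<Sum>i<n. r i * Ab $$ (j,i)) = sg * q0i * kk j" using s_pos' by simp
  then show ?thesis unfolding v0_def by simp
qed

end

context bside begin

definition idx :: "nat \<Rightarrow> nat \<Rightarrow> nat" where "idx i b = (if b - 1 < i then b - 1 else b)"
definition Cm :: "nat \<Rightarrow> rat mat" where
  "Cm i = mat n n (\<lambda>(a,b). if b = 0 then - rat_of_int (r a) / rat_of_int q0i
       else (if a = idx i b then 1 else 0))"

lemma Cm: "Cm i \<in> carrier_mat n n" unfolding Cm_def by auto
lemma Cm_dims[simp]: "dim_row (Cm i) = n" "dim_col (Cm i) = n" unfolding Cm_def by auto

lemma delcol_fact: assumes i: "i < n"
  shows "map_mat rat_of_int (del_col Vb (Suc i)) = map_mat rat_of_int Ab * Cm i"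
proof (rule eq_matI)
  have dc: "dim_row (del_col Vb (Suc i)) = n" "dim_col (del_col Vb (Suc i)) = n"
    using Vb unfolding del_col_def by auto
  show "dim_row (map_mat rat_of_int (del_col Vb (Suc i))) = dim_row (map_mat rat_of_int Ab * Cm i)"
    using dc Ab by auto
  show "dim_col (map_mat rat_of_int (del_col Vb (Suc i))) = dim_col (map_mat rat_of_int Ab * Cm i)"
    using dc Cm by auto
  fix a b assume "a < dim_row (map_mat rat_of_int Ab * Cm i)" "b < dim_col (map_mat rat_of_int Ab * Cm i)"
  hence a: "a < n" and b: "b < n" using Ab Cm by auto
  have lhs: "del_col Vb (Suc i) $$ (a,b) = Vb $$ (a, if b < Suc i then b else Suc b)"
    unfolding del_col_def using Vb a b by auto
  have rhs: "(map_mat rat_of_int Ab * Cm i) $$ (a,b) = (\<Sum>k<n. rat_of_int (Ab $$ (a,k)) * Cm i $$ (k,b))"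
    by (rule trans[OF mult_entry[of _ n n _ n]], insert Ab Cm a b, auto intro!: sum.cong)
  show "map_mat rat_of_int (del_col Vb (Suc i)) $$ (a,b) = (map_mat rat_of_int Ab * Cm i) $$ (a,b)"
  proof (cases "b = 0")
    case True
    have "(\<Sum>k<n. rat_of_int (Ab $$ (a,k)) * Cm i $$ (k,b)) =
      (\<Sum>k<n. rat_of_int (Ab $$ (a,k)) * (- rat_of_int (r k) / rat_of_int q0i))"
      by (rule sum.cong[OF refl], insert True b, auto simp: Cm_def)
    also have "\<dots> = - rat_of_int (\<Sum>k<n. r k * Ab $$ (a,k)) / rat_of_int q0i"
      by (simp add: sum_divide_distrib sum_negf mult_ac)
    also have "(\<Sum>k<n. r k * Ab $$ (a,k)) = - (q0i * v0 a)" using sum_rel[OF a] by simp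
    also have "- rat_of_int (- (q0i * v0 a)) / rat_of_int q0i = rat_of_int (v0 a)"
      using q0i_pos by simp
    finally show ?thesis unfolding rhs using lhs a b dc True by (simp add: Vb_def)
  next
    case False
    have ib: "idx i b < n" unfolding idx_def using b by auto
    have "(\<Sum>k<n. rat_of_int (Ab $$ (a,k)) * Cm i $$ (k,b)) =
      (\<Sum>k<n. if k = idx i b then rat_of_int (Ab $$ (a, idx i b)) else 0)"
      by (rule sum.cong[OF refl], insert False b, auto simp: Cm_def)
    also have "\<dots> = rat_of_int (Ab $$ (a, idx i b))" using ib by simp
    finally have r1: "(map_mat rat_of_int Ab * Cm i) $$ (a,b) = rat_of_int (Ab $$ (a, idx i b))"
      unfolding rhs .
    have "del_col Vb (Suc i) $$ (a,b) = Ab $$ (a, idx i b)"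
      unfolding lhs using False a b by (auto simp: Vb_def idx_def)
    then show ?thesis unfolding r1 using a b dc by simp
  qed
qed

lemma mat_delete_Cm: assumes i: "i < n" shows "mat_delete (Cm i) i 0 = 1\<^sub>m (n - 1)"
proof (rule eq_matI)
  fix a b assume "a < dim_row (1\<^sub>m (n - 1) :: rat mat)" "b < dim_col (1\<^sub>m (n - 1) :: rat mat)"
  hence a: "a < n - 1" and b: "b < n - 1" by auto
  have "mat_delete (Cm i) i 0 $$ (a,b) = Cm i $$ (if a < i then a else Suc a, Suc b)"
    unfolding mat_delete_def using a b Cm by auto
  also have "\<dots> = (if (if a < i then a else Suc a) = idx i (Suc b) then 1 else 0)"
    unfolding Cm_def using a b by auto
  also have "\<dots> = (1\<^sub>m (n - 1)) $$ (a,b)" using a b unfolding idx_def by auto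
  finally show "mat_delete (Cm i) i 0 $$ (a,b) = (1\<^sub>m (n - 1)) $$ (a,b)" .
qed (insert Cm, auto)

lemma det_Cm: assumes i: "i < n" shows "det (Cm i) = (-1)^i * (- rat_of_int (r i) / rat_of_int q0i)"
proof -
  have "det (Cm i) = (\<Sum>b<n. Cm i $$ (i,b) * cofactor (Cm i) i b)"
    by (rule laplace_expansion_row[OF Cm i])
  also have "\<dots> = (\<Sum>b<n. if b = 0 then Cm i $$ (i,0) * cofactor (Cm i) i 0 else 0)"
    by (rule sum.cong[OF refl], insert i, auto simp: Cm_def idx_def)
  also have "\<dots> = Cm i $$ (i,0) * cofactor (Cm i) i 0" using n by simp
  also have "cofactor (Cm i) i 0 = (-1)^i" unfolding cofactor_def mat_delete_Cm[OF i] by simp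
  also have "Cm i $$ (i,0) = - rat_of_int (r i) / rat_of_int q0i" unfolding Cm_def using i n by auto
  finally show ?thesis by simp
qed

lemma Vdet_Suc: assumes i: "i < n" shows "\<bar>Vdet Vb (Suc i)\<bar> = r i"
proof -
  have dcar: "del_col Vb (Suc i) \<in> carrier_mat n n" using Vb unfolding del_col_def by auto
  have "rat_of_int (Vdet Vb (Suc i)) = det (map_mat rat_of_int (del_col Vb (Suc i)))"
    unfolding Vdet_def by simp
  also have "\<dots> = det (map_mat rat_of_int Ab) * det (Cm i)"
    unfolding delcol_fact[OF i] by (rule det_mult[OF _ Cm], insert Ab, auto)
  also have "\<dots> = rat_of_int (det Ab) * ((-1)^i * (- rat_of_int (r i) / rat_of_int q0i))"
    unfolding det_Cm[OF i] by simp
  finally have "\<bar>rat_of_int (Vdet Vb (Suc i))\<bar> = rat_of_int q0i * (rat_of_int (r i) / rat_of_int q0i)"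
    unfolding q0i_def using r_pos[OF i] by (simp add: abs_mult)
  also have "\<dots> = rat_of_int (r i)" using q0i_pos by simp
  finally show ?thesis by linarith
qed

end

lemma del_col_mult:
  assumes A: "A \<in> carrier_mat nr m" and B: "B \<in> carrier_mat m (Suc nc)"
  shows "del_col (A * B) j = A * del_col B j"
  by (rule eq_matI, insert A B, auto simp: del_col_def scalar_prod_def)

context bside begin

lemma F_Vb: "F_admissible n Vb"
proof -
  have nz: "Vdet Vb j \<noteq> 0" if j: "j \<le> n" for j
  proof (cases j)
    case 0 then show ?thesis using q0i_pos unfolding 0 Vdet0 q0i_def by auto
  next
    case (Suc i) then show ?thesis using Vdet_Suc[of i] r_pos[of i] j by auto
  qed
  have gcd: "Gcd (Vdet Vb ` {0..n}) = 1"
  proof -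
    let ?g = "Gcd (Vdet Vb ` {0..n})"
    have "?g * s dvd adj_mat W $$ (i,j)" if i: "i < n" and j: "j < n" for i j
    proof -
      have "?g dvd Vdet Vb (Suc i)" using i by (intro Gcd_dvd) auto
      then have "?g dvd r i" using Vdet_Suc[OF i] by (metis dvd_abs_iff)
      then have "?g * s dvd r i * s" by (rule mult_dvd_mono, simp)
      also have "r i * s = si i" using r_rel[OF i] by (simp add: mult.commute)
      also have "si i dvd adj_mat W $$ (i,j)" by (rule si_dvd[OF W dW i j])
      finally show ?thesis .
    qed
    then have "?g * s dvd s" unfolding s_def by (intro Gcd_greatest) auto
    then obtain t where "s = ?g * s * t" by blast
    then have "s * 1 = s * (?g * t)" by (simp add: mult_ac)
    moreover have sne: "s \<noteq> 0" using s_pos' by simp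
    ultimately have "?g * t = 1" using mult_left_cancel[OF sne, of 1 "?g * t"] by simp
    then have "?g dvd 1" by (metis dvd_triv_left)
    moreover have "?g \<ge> 0" by simp
    ultimately show ?thesis using zdvd_imp_le[of ?g 1] by (cases "?g = 0") auto
  qed
  have sum: "(\<Sum>c\<le>n. \<bar>Vdet Vb c\<bar> * Vb $$ (j,c)) = 0" if j: "j < n" for j
  proof -
    have "(\<Sum>c\<le>n. \<bar>Vdet Vb c\<bar> * Vb $$ (j,c)) = q0i * v0 j + (\<Sum>i<n. r i * Ab $$ (j,i))"
      unfolding sum_atMost_split0 Vdet0 q0i_def[symmetric] using j Vdet_Suc
      by (auto simp: Vb_def intro!: sum.cong)
    then show ?thesis using sum_rel[OF j] by simp
  qed
  show ?thesis unfolding F_admissible_def using Vb nz gcd sum by auto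
qed

definition N :: int where "N = \<bar>det W\<bar> div s"

lemma N_rel: assumes i: "i < n" shows "N = r i * e i"
proof -
  have "\<bar>det W\<bar> = s * (r i * e i)" using e_rel'[OF i] r_rel[OF i] by (simp add: mult_ac)
  then show ?thesis unfolding N_def using s_pos' by simp
qed

lemma q0i_dvd_N: "q0i dvd N"
proof -
  have b: "\<forall>j<n. \<exists>k::int. rat_of_int (vec n (\<lambda>j. \<Sum>i<n. adj_mat W $$ (i,j)) $ j) =
      \<bar>det (W_hat W)\<bar> * rat_of_int (Gcd {adj_mat W $$ (i,j) | i j. i < n \<and> j < n}) * rat_of_int k"
    using kk by auto
  from b_iff_c[OF W dW n] b obtain k :: int where
    k: "rat_of_int \<bar>det W\<bar> / rat_of_int (Gcd {adj_mat W $$ (i,j) | i j. i < n \<and> j < n}) = \<bar>det (W_hat W)\<bar> * rat_of_int k"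
    by blast
  have "rat_of_int \<bar>det W\<bar> = rat_of_int (s * q0i * k)"
    using k s_pos' unfolding s_def[symmetric] q0i_eq[symmetric] by (simp add: field_simps)
  then have "\<bar>det W\<bar> = s * (q0i * k)" by (simp only: of_int_eq_iff mult.assoc)
  then have "N = q0i * k" unfolding N_def using s_pos' by simp
  then show ?thesis by simp
qed

lemma r_dvd_N: "i < n \<Longrightarrow> r i dvd N" using N_rel by simp

abbreviation L where "L \<equiv> deltaQ n Vb"

lemma Vdet_abs: "(\<lambda>j. \<bar>Vdet Vb j\<bar>) ` {0..n} = insert q0i (r ` {..<n})"
proof -
  have e: "{0..n} = insert 0 (Suc ` {..<n})"
    by (simp add: atLeast0AtMost lessThan_Suc_atMost[symmetric] lessThan_Suc_eq_insert_0)
  have "(\<lambda>j. \<bar>Vdet Vb j\<bar>) ` {0..n} = insert \<bar>Vdet Vb 0\<bar> ((\<lambda>i. \<bar>Vdet Vb (Suc i)\<bar>) ` {..<n})"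
    unfolding e image_insert image_image ..
  also have "(\<lambda>i. \<bar>Vdet Vb (Suc i)\<bar>) ` {..<n} = r ` {..<n}"
    by (rule image_cong[OF refl], rule Vdet_Suc, simp)
  finally show ?thesis unfolding Vdet0 q0i_def .
qed

lemma L_dvd_N: "L dvd N"
  unfolding deltaQ_def Vdet_abs using q0i_dvd_N r_dvd_N by (intro Lcm_least) auto

lemma q0i_dvd_L: "q0i dvd L" unfolding deltaQ_def Vdet_abs by (intro dvd_Lcm) auto
lemma r_dvd_L: "i < n \<Longrightarrow> r i dvd L" unfolding deltaQ_def Vdet_abs by (intro dvd_Lcm) auto

end

context bside begin

lemma N_pos: "N > 0"
  using N_rel[OF n] r_pos[OF n] ei_pos[OF W dW n] unfolding e_def by simp

lemma Tmat_entry0: assumes i: "i < n"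
  shows "(transpose_mat W * Vb) $$ (i,0) = - (sg * (\<Sum>j<n. W $$ (j,i) * kk j))"
proof -
  have "(transpose_mat W * Vb) $$ (i,0) = (\<Sum>j<n. transpose_mat W $$ (i,j) * Vb $$ (j,0))"
    by (rule mult_entry[OF _ Vb i], insert W, auto)
  also have "\<dots> = (\<Sum>j<n. W $$ (j,i) * (- sg * kk j))"
    by (rule sum.cong[OF refl], insert W i, auto simp: Vb_def v0_def)
  finally show ?thesis by (simp add: sum_distrib_left mult_ac sum_negf)
qed

lemma Tmat_entryS: assumes i: "i < n" and c: "c < n"
  shows "(transpose_mat W * Vb) $$ (i,Suc c) = (if c = i then e c else 0)"
proof -
  have "(transpose_mat W * Vb) $$ (i,Suc c) = (\<Sum>j<n. transpose_mat W $$ (i,j) * Vb $$ (j,Suc c))"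
    by (rule mult_entry[OF _ Vb i], insert W c, auto)
  also have "\<dots> = (\<Sum>j<n. Ab $$ (j,c) * W $$ (j,i))"
    by (rule sum.cong[OF refl], insert W i c, auto simp: Vb_def)
  also have "\<dots> = (if c = i then e c else 0)" by (rule AbTW[OF c i])
  finally show ?thesis .
qed

lemma X_rel: assumes i: "i < n" shows "q0i * (sg * (\<Sum>j<n. W $$ (j,i) * kk j)) = N"
proof -
  have "(\<Sum>k<n. W $$ (k,i) * (\<Sum>m<n. adj_mat W $$ (m,k))) = det W" by (rule W_v[OF W dW i])
  also have "(\<Sum>k<n. W $$ (k,i) * (\<Sum>m<n. adj_mat W $$ (m,k))) = (\<Sum>k<n. W $$ (k,i) * (q0i * s * kk k))"
    by (rule sum.cong[OF refl], simp add: v_int)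
  also have "\<dots> = s * (q0i * (\<Sum>j<n. W $$ (j,i) * kk j))" by (simp add: sum_distrib_left mult_ac)
  finally have "s * (q0i * (\<Sum>j<n. W $$ (j,i) * kk j)) = det W" .
  then have "s * (q0i * (sg * (\<Sum>j<n. W $$ (j,i) * kk j))) = sg * det W" by (simp add: mult_ac)
  also have "\<dots> = s * N"
  proof -
    have "s dvd \<bar>det W\<bar>" using dvd_trans[OF s_dvd_si[OF W dW i] si_dvd_det[OF W dW i]] unfolding s_def by simp
    then show ?thesis unfolding sg_d N_def by simp
  qed
  finally show ?thesis using s_pos' by simp
qed

lemma N_dvd_L: "N dvd L"
proof -
  have Lne: "L \<noteq> 0" using L_dvd_N N_pos by auto
  obtain m where m: "N = L * m" using L_dvd_N by blast
  have T: "transpose_mat W * Vb \<in> carrier_mat n (Suc n)" using W Vb by auto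
  have mT: "m dvd (transpose_mat W * Vb) $$ (i,c)" if i: "i < n" and c: "c < Suc n" for i c
  proof (cases c)
    case 0
    obtain t where t: "L = q0i * t" using q0i_dvd_L by blast
    have "q0i * (sg * (\<Sum>j<n. W $$ (j,i) * kk j)) = q0i * (t * m)" using X_rel[OF i] m t by (simp add: mult_ac)
    then have "sg * (\<Sum>j<n. W $$ (j,i) * kk j) = t * m" using q0i_pos by simp
    then show ?thesis unfolding 0 Tmat_entry0[OF i] by simp
  next
    case (Suc c')
    with c have c': "c' < n" by auto
    obtain t where t: "L = r c' * t" using r_dvd_L[OF c'] by blast
    have "r c' * e c' = N" by (rule N_rel[OF c', symmetric])
    also have "\<dots> = L * m" by (rule m)
    also have "\<dots> = r c' * (t * m)" unfolding t by (simp only: mult.assoc)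
    finally have "r c' * e c' = r c' * (t * m)" .
    moreover have rne: "r c' \<noteq> 0" using r_pos[OF c'] by simp
    ultimately have "e c' = t * m" by (simp only: mult_left_cancel[OF rne])
    then show ?thesis unfolding Suc Tmat_entryS[OF i c'] by auto
  qed
  have mW: "m dvd Vdet Vb j * W $$ (b,a)" if j: "j \<le> n" and a: "a < n" and b: "b < n" for j a b
  proof -
    define D where "D = del_col Vb j"
    have D: "D \<in> carrier_mat n n" unfolding D_def del_col_def using Vb by auto
    have aD: "adj_mat D \<in> carrier_mat n n" using adj_mat[OF D] by auto
    have dT: "del_col (transpose_mat W * Vb) j = transpose_mat W * D"
      unfolding D_def by (rule del_col_mult[OF _ Vb], insert W, auto)
    have dTc: "del_col (transpose_mat W * Vb) j \<in> carrier_mat n n"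
      using W Vb unfolding del_col_def by auto
    have "del_col (transpose_mat W * Vb) j * adj_mat D = transpose_mat W * (D * adj_mat D)"
      unfolding dT by (rule assoc_mult_mat[OF _ D aD], insert W, auto)
    also have "\<dots> = transpose_mat W * (det D \<cdot>\<^sub>m 1\<^sub>m n)" using adj_mat[OF D] by simp
    also have "\<dots> = det D \<cdot>\<^sub>m transpose_mat W" using W by auto
    finally have eq: "del_col (transpose_mat W * Vb) j * adj_mat D = det D \<cdot>\<^sub>m transpose_mat W" .
    have "(del_col (transpose_mat W * Vb) j * adj_mat D) $$ (a,b) =
       (\<Sum>k<n. del_col (transpose_mat W * Vb) j $$ (a,k) * adj_mat D $$ (k,b))"
      by (rule mult_entry[OF dTc aD a b])
    moreover have "m dvd (\<Sum>k<n. del_col (transpose_mat W * Vb) j $$ (a,k) * adj_mat D $$ (k,b))"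
    proof (rule dvd_sum, rule dvd_mult2)
      fix k assume k: "k \<in> {..<n}"
      have "del_col (transpose_mat W * Vb) j $$ (a,k) = (transpose_mat W * Vb) $$ (a, if k < j then k else Suc k)"
        unfolding del_col_def using W Vb a k by auto
      then show "m dvd del_col (transpose_mat W * Vb) j $$ (a,k)" using mT[OF a] k by auto
    qed
    ultimately have "m dvd (det D \<cdot>\<^sub>m transpose_mat W) $$ (a,b)" unfolding eq by simp
    then show ?thesis unfolding D_def Vdet_def using W a b by simp
  qed
  have "m dvd W $$ (b,a)" if a: "a < n" and b: "b < n" for a b
  proof -
    have "m dvd Gcd ((*) (W $$ (b,a)) ` (Vdet Vb ` {0..n}))"
      by (rule Gcd_greatest, insert mW a b, auto simp: mult.commute)
    also have "\<dots> = \<bar>W $$ (b,a)\<bar>" unfolding Gcd_mult_int using F_Vb unfolding F_admissible_def by simp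
    finally show ?thesis by simp
  qed
  then have "m dvd Gcd {W $$ (i,j) | i j. i < n \<and> j < n}" by (intro Gcd_greatest) auto
  then have "m dvd 1" unfolding gcdW .
  moreover have "m > 0" using m N_pos L_dvd_N Lne
    by (metis deltaQ_def Lcm_int_greater_eq_0 less_le zero_less_mult_pos)
  ultimately have "m = 1" using zdvd_imp_le[of m 1] by auto
  then show ?thesis using m by simp
qed

lemma L_eq: "L = N"
  using L_dvd_N N_dvd_L N_pos by (simp add: deltaQ_def zdvd_antisym_nonneg)

end

context bside begin

definition X :: "rat mat" where "X = map_mat rat_of_int W * mat_diag n (\<lambda>k. 1 / rat_of_int (e k))"

lemma X_carrier: "X \<in> carrier_mat n n" unfolding X_def using W by auto

lemma X_entry: "a < n \<Longrightarrow> b < n \<Longrightarrow> X $$ (a,b) = rat_of_int (W $$ (a,b)) / rat_of_int (e b)"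
  unfolding X_def by (subst mat_diag_mult_right[of _ n], insert W, auto)

lemma e_pos': "i < n \<Longrightarrow> e i > 0" unfolding e_def by (rule ei_pos[OF W dW])

lemma AX: "transpose_mat (map_mat rat_of_int Ab) * X = 1\<^sub>m n"
proof (rule eq_matI)
  fix i m assume "i < dim_row (1\<^sub>m n :: rat mat)" "m < dim_col (1\<^sub>m n :: rat mat)"
  hence i: "i < n" and m: "m < n" by auto
  have "(transpose_mat (map_mat rat_of_int Ab) * X) $$ (i,m) =
     (\<Sum>j<n. transpose_mat (map_mat rat_of_int Ab) $$ (i,j) * X $$ (j,m))"
    by (rule mult_entry[OF _ X_carrier i m], insert Ab, auto)
  also have "\<dots> = (\<Sum>j<n. rat_of_int (Ab $$ (j,i) * W $$ (j,m)) / rat_of_int (e m))"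
    by (rule sum.cong[OF refl], insert Ab i m, auto simp: X_entry)
  also have "\<dots> = rat_of_int (\<Sum>j<n. Ab $$ (j,i) * W $$ (j,m)) / rat_of_int (e m)"
    by (simp only: sum_divide_distrib of_int_sum)
  also have "\<dots> = (1\<^sub>m n) $$ (i,m)" unfolding AbTW[OF i m] using i m e_pos'[OF m] by auto
  finally show "(transpose_mat (map_mat rat_of_int Ab) * X) $$ (i,m) = (1\<^sub>m n) $$ (i,m)" .
qed (insert Ab X_carrier, auto)

lemma inv_Ab: "inv_mat (map_mat rat_of_int Ab) = transpose_mat X"
proof -
  have AT: "transpose_mat (map_mat rat_of_int Ab) \<in> carrier_mat n n" using Ab by auto
  have XA: "X * transpose_mat (map_mat rat_of_int Ab) = 1\<^sub>m n"
    by (rule mat_mult_left_right_inverse[OF AT X_carrier AX])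
  have "map_mat rat_of_int Ab * transpose_mat X = 1\<^sub>m n"
    using arg_cong[OF XA, of transpose_mat] transpose_mult[OF X_carrier AT] by simp
  then show ?thesis by (rule inv_mat_eq[rotated 2], insert Ab X_carrier, auto)
qed

lemma WT_Vb: "weighted_transverse n Vb = map_mat rat_of_int W"
proof -
  have st: "star_mat (map_mat rat_of_int (V0 Vb)) = X"
    unfolding V0_def delcol0 star_mat_def inv_Ab by simp
  show ?thesis unfolding weighted_transverse_def st L_eq
  proof (rule eq_matI)
    fix a b assume "a < dim_row (map_mat rat_of_int W)" "b < dim_col (map_mat rat_of_int W)"
    hence a: "a < n" and b: "b < n" using W by auto
    have vr: "\<bar>rat_of_int (Vdet Vb (Suc b))\<bar> = rat_of_int (r b)"
      using arg_cong[OF Vdet_Suc[OF b], of rat_of_int] by simp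
    have "(X * (rat_of_int N \<cdot>\<^sub>m mat_diag n (\<lambda>k. 1 / rat_of_int \<bar>Vdet Vb (Suc k)\<bar>))) $$ (a,b)
      = (\<Sum>k<n. X $$ (a,k) * (rat_of_int N \<cdot>\<^sub>m mat_diag n (\<lambda>k. 1 / rat_of_int \<bar>Vdet Vb (Suc k)\<bar>)) $$ (k,b))"
      by (rule mult_entry[OF X_carrier _ a b], auto)
    also have "\<dots> = (\<Sum>k<n. if k = b then X $$ (a,b) * (rat_of_int N / rat_of_int (r b)) else 0)"
      by (rule sum.cong[OF refl], insert b, auto simp: mat_diag_def vr)
    also have "\<dots> = X $$ (a,b) * (rat_of_int N / rat_of_int (r b))" using b by simp
    also have "\<dots> = rat_of_int (W $$ (a,b))"
      unfolding X_entry[OF a b] N_rel[OF b] using r_pos[OF b] e_pos'[OF b] by simp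
    finally show "(X * (rat_of_int N \<cdot>\<^sub>m mat_diag n (\<lambda>k. 1 / rat_of_int \<bar>Vdet Vb (Suc k)\<bar>))) $$ (a,b)
      = map_mat rat_of_int W $$ (a,b)" using a b W by simp
  qed (insert X_carrier W, auto simp: mat_diag_def)
qed

lemma P_adm: "P_admissible n W"
  unfolding P_admissible_def using W F_Vb WT_Vb by auto

end

theorem mainTheorem10:
  fixes n :: nat and W :: "int mat"
  assumes W_dim: "W \<in> carrier_mat n n"
    and W_inv: "det W \<noteq> 0"
    and W_gcd: "Gcd {W $$ (i,j) | i j. i < n \<and> j < n} = 1"
  defines "s \<equiv> Gcd {adj_mat W $$ (i,j) | i j. i < n \<and> j < n}"
    and "v \<equiv> vec n (\<lambda>j. \<Sum>i<n. adj_mat W $$ (i,j))"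
    and "q0 \<equiv> \<bar>det (W_hat W)\<bar>"
    and "\<delta> \<equiv> rat_of_int \<bar>det W\<bar> /
        rat_of_int (Gcd {adj_mat W $$ (i,j) | i j. i < n \<and> j < n})"
  shows "(P_admissible n W \<longleftrightarrow>
            (\<forall>j<n. \<exists>k::int. rat_of_int (v $ j) = q0 * rat_of_int s * rat_of_int k))
       \<and> ((\<forall>j<n. \<exists>k::int. rat_of_int (v $ j) = q0 * rat_of_int s * rat_of_int k) \<longleftrightarrow>
            ((\<exists>k::int. \<delta> = q0 * rat_of_int k) \<and>
             (\<exists>c::int vec. c \<in> carrier_vec n \<and>
                map_vec rat_of_int (transpose_mat W *\<^sub>v c) = vec n (\<lambda>_. \<delta> / q0))))"
proof -
  have n: "n > 0"
  proof (rule ccontr)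
    assume "\<not> n > 0"
    then have "{W $$ (i,j) | i j. i < n \<and> j < n} = {}" by auto
    with W_gcd show False by simp
  qed
  have BC: "(\<forall>j<n. \<exists>k::int. rat_of_int (v $ j) = q0 * rat_of_int s * rat_of_int k) \<longleftrightarrow>
            ((\<exists>k::int. \<delta> = q0 * rat_of_int k) \<and>
             (\<exists>c::int vec. c \<in> carrier_vec n \<and>
                map_vec rat_of_int (transpose_mat W *\<^sub>v c) = vec n (\<lambda>_. \<delta> / q0)))"
    unfolding s_def v_def q0_def \<delta>_def by (rule b_iff_c[OF W_dim W_inv n])
  have AB: "P_admissible n W \<longleftrightarrow>
            (\<forall>j<n. \<exists>k::int. rat_of_int (v $ j) = q0 * rat_of_int s * rat_of_int k)"
  proof
    assume "P_admissible n W"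
    then obtain V where F: "F_admissible n V" and WV: "map_mat rat_of_int W = weighted_transverse n V"
      unfolding P_admissible_def by blast
    interpret adm n W V by (unfold_locales, rule W_dim, rule W_inv, rule n, rule F, rule WV)
    show "\<forall>j<n. \<exists>k::int. rat_of_int (v $ j) = q0 * rat_of_int s * rat_of_int k"
      unfolding s_def v_def q0_def by (rule a_to_b)
  next
    assume b: "\<forall>j<n. \<exists>k::int. rat_of_int (v $ j) = q0 * rat_of_int s * rat_of_int k"
    then obtain kk where kk: "\<And>j. j < n \<Longrightarrow> rat_of_int (v $ j) = q0 * rat_of_int s * rat_of_int (kk j)"
      by metis
    have kk': "\<And>j. j < n \<Longrightarrow> rat_of_int (\<Sum>i<n. adj_mat W $$ (i,j)) =
       \<bar>det (W_hat W)\<bar> * rat_of_int (Gcd {adj_mat W $$ (i,j) | i j. i < n \<and> j < n}) * rat_of_int (kk j)"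
      using kk unfolding v_def s_def q0_def by simp
    interpret bside n W kk by (unfold_locales, rule W_dim, rule W_inv, rule n, rule W_gcd, rule kk')
    show "P_admissible n W" by (rule P_adm)
  qed
  show ?thesis using AB BC by blast
qed

end
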